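(* Let $a\in\mathbb{R}$, $b\in(a,\infty)$, let $p\in C([a,b],[0,\infty))$ be strictly increasing, let $g\in C([a,b],\mathbb{R})$ and $L\in(0,\infty)$ satisfy for all $x,y\in[a,b]$ with $x<y$ that $g(y)-g(x)>3L(y-x)$, and assume $\int_a^bg(x)p(x)\,\mathrm{d}x=0$. Then $L\int_a^bp(x)\,\mathrm{d}x<g(b)p(b)$. *)

theory Defs
  imports "HOL-Analysis.Analysis"
begin

end

theory Submission
  imports Defs
begin

lemma lin_int:
  fixes e b A c :: real
  assumes "e \<le> b"
  shows "((\<lambda>x. A - c * (b - x)) has_integral (A * (b - e) - c * (b - e)^2 / 2)) {e..b}"
proof -
  have "((\<lambda>x. A - c * (b - x)) has_integral
        ((\<lambda>x. A * x + c * (b - x)^2 / 2) b - (\<lambda>x. A * x + c * (b - x)^2 / 2) e)) {e..b}"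
    apply (rule fundamental_theorem_of_calculus[OF assms])
    apply (simp only: has_real_derivative_iff_has_vector_derivative[symmetric])
    apply (auto intro!: derivative_eq_intros simp: field_simps)
    done
  moreover have "(\<lambda>x. A * x + c * (b - x)^2 / 2) b - (\<lambda>x. A * x + c * (b - x)^2 / 2) e
      = A * (b - e) - c * (b - e)^2 / 2" by (simp add: algebra_simps)
  ultimately show ?thesis by (metis (no_types))
qed

theorem lemma2p8:
  fixes a b L :: real and p g :: "real \<Rightarrow> real"
  assumes "a < b"
    and "continuous_on {a..b} p"
    and "\<forall>x\<in>{a..b}. p x \<ge> 0"
    and "strict_mono_on {a..b} p"
    and "continuous_on {a..b} g"
    and "L > 0"
    and "\<forall>x\<in>{a..b}. \<forall>y\<in>{a..b}. x < y \<longrightarrow> g y - g x > 3 * L * (y - x)"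
    and "integral {a..b} (\<lambda>x. g x * p x) = 0"
  shows "L * integral {a..b} p < g b * p b"
proof -
  note ab = assms(1) and pc = assms(2) and pnn = assms(3) and smo = assms(4)
    and gc = assms(5) and Lp = assms(6) and gs = assms(7) and I0 = assms(8)
  have pos: "p x > 0" if "x \<in> {a<..b}" for x
  proof -
    have "p a < p x" using smo that ab unfolding strict_mono_on_def by auto
    moreover have "p a \<ge> 0" using pnn ab by auto
    ultimately show ?thesis by simp
  qed
  define P where "P = p b"
  have P0: "P > 0" unfolding P_def using pos ab by auto
  have pleP: "p x \<le> P" if "x \<in> {a..b}" for x
    using smo that unfolding P_def strict_mono_on_def
    by (cases "x = b") (auto intro: less_imp_le)
  define G where "G = g b"
  have gle: "g x \<le> G - 3 * L * (b - x)" if "x \<in> {a..b}" for x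
  proof (cases "x = b")
    case True then show ?thesis unfolding G_def by simp
  next
    case False then have "x < b" using that by auto
    then show ?thesis using gs that ab unfolding G_def by fastforce
  qed
  have gpint: "(\<lambda>x. g x * p x) integrable_on {a..b}"
    by (rule integrable_continuous_interval) (intro continuous_intros gc pc)
  have G0: "G > 0"
  proof (rule ccontr)
    assume "\<not> G > 0"
    then have Gn: "G \<le> 0" by simp
    define m where "m = (a + b) / 2"
    have m: "m \<in> {a<..<b}" using ab unfolding m_def by auto
    have "3 * L * (b - m) > 0" using m Lp by simp
    then have "g m < 0" using gle[of m] m Gn by auto
    moreover have "p m > 0" using pos m by auto
    ultimately have neg: "(\<lambda>x. - (g x * p x)) m \<noteq> 0"
      by (simp add: mult_neg_pos)
    have "(\<lambda>x. - (g x * p x)) m = 0"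
    proof (rule has_integral_0_cbox_imp_0[of a b "\<lambda>x. - (g x * p x)" m])
      show "continuous_on (cbox a b) (\<lambda>x. - (g x * p x))"
        using gc pc by (auto intro!: continuous_intros)
      show "0 \<le> - (g x * p x)" if "x \<in> box a b" for x
      proof -
        have x: "x \<in> {a..b}" using that by auto
        have "3 * L * (b - x) \<ge> 0" using x Lp by simp
        then have "g x \<le> 0" using gle[OF x] Gn by linarith
        then show ?thesis using pnn x by (simp add: mult_nonpos_nonneg)
      qed
      show "((\<lambda>x. - (g x * p x)) has_integral 0) (cbox a b)"
        using has_integral_neg[OF integrable_integral[OF gpint]] I0 by simp
      show "box a b \<noteq> {}" using ab by auto
      show "m \<in> cbox a b" using m by auto
    qed
    with neg show False by simp
  qed
  define lam where "lam = 2 * L / G"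
  define c where "c = 6 * L^2 / G"
  define h where "h = (\<lambda>x. max 0 (L + lam * g x) * p x)"
  have hc: "continuous_on {a..b} h"
    unfolding h_def using gc pc by (auto intro!: continuous_intros)
  have hint: "h integrable_on {a..b}" by (rule integrable_continuous_interval[OF hc])
  have pint: "p integrable_on {a..b}" by (rule integrable_continuous_interval[OF pc])
  have h0: "h x \<ge> 0" if "x \<in> {a..b}" for x
    unfolding h_def using pnn that by auto
  have step1: "L * integral {a..b} p \<le> integral {a..b} h"
  proof -
    have "integral {a..b} (\<lambda>x. L * p x) \<le> integral {a..b} (\<lambda>x. h x - lam * (g x * p x))"
    proof (rule integral_le)
      show "(\<lambda>x. L * p x) integrable_on {a..b}" using pint by (rule integrable_on_mult_right)
      show "(\<lambda>x. h x - lam * (g x * p x)) integrable_on {a..b}"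
        using hint integrable_on_mult_right[OF gpint, of lam] by (rule integrable_diff)
      show "L * p x \<le> h x - lam * (g x * p x)" if "x \<in> {a..b}" for x
      proof -
        have "(L + lam * g x) * p x \<le> h x" unfolding h_def
          using pnn that by (intro mult_right_mono) auto
        then show ?thesis by (simp add: algebra_simps)
      qed
    qed
    also have "\<dots> = integral {a..b} h"
      using integral_diff[OF hint integrable_on_mult_right[OF gpint, of lam]] I0 by simp
    finally show ?thesis by simp
  qed
  have hle: "h x \<le> (3 * L - c * (b - x)) * P" if "x \<in> {a..b}" "b - x \<le> G / (2 * L)" for x
  proof -
    have "L + lam * g x \<le> L + lam * (G - 3 * L * (b - x))"
      using gle[OF that(1)] Lp G0 unfolding lam_def by (intro add_left_mono mult_left_mono) auto
    also have "\<dots> = 3 * L - c * (b - x)" unfolding lam_def c_def using G0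
      by (simp add: field_simps power2_eq_square)
    finally have A: "L + lam * g x \<le> 3 * L - c * (b - x)" .
    have B: "0 \<le> 3 * L - c * (b - x)"
    proof -
      have "c * (b - x) \<le> c * (G / (2 * L))" using that(2) G0 Lp unfolding c_def
        by (intro mult_left_mono) auto
      also have "\<dots> = 3 * L" unfolding c_def using G0 Lp by (simp add: field_simps power2_eq_square)
      finally show ?thesis by simp
    qed
    have "max 0 (L + lam * g x) \<le> 3 * L - c * (b - x)" using A B by simp
    then show ?thesis unfolding h_def
      using pleP[OF that(1)] pnn that(1) B by (intro mult_mono) auto
  qed
  have h_zero: "h x \<le> 0" if "x \<in> {a..b}" "b - x \<ge> G / (2 * L)" for x
  proof -
    have "L + lam * g x \<le> L + lam * (G - 3 * L * (b - x))"
      using gle[OF that(1)] Lp G0 unfolding lam_def by (intro add_left_mono mult_left_mono) auto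
    also have "\<dots> = 3 * L - c * (b - x)" unfolding lam_def c_def using G0
      by (simp add: field_simps power2_eq_square)
    also have "\<dots> \<le> 0"
    proof -
      have "c * (G / (2 * L)) \<le> c * (b - x)" using that(2) G0 Lp unfolding c_def
        by (intro mult_left_mono) auto
      moreover have "c * (G / (2 * L)) = 3 * L" unfolding c_def using G0 Lp
        by (simp add: field_simps power2_eq_square)
      ultimately show ?thesis by simp
    qed
    finally show ?thesis unfolding h_def by simp
  qed
  define e where "e = max a (b - G / (2 * L))"
  have e: "a \<le> e" "e \<le> b" "b - e \<le> G / (2 * L)" unfolding e_def using ab G0 Lp by auto
  have lin: "((\<lambda>x. (3 * L - c * (b - x)) * P) has_integral
        ((3 * L) * (b - e) - c * (b - e)^2 / 2) * P) {e..b}"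
    using has_integral_mult_left[OF lin_int[OF e(2), of "3 * L" c], of P] by simp
  have I2: "integral {e..b} h \<le> ((3 * L) * (b - e) - c * (b - e)^2 / 2) * P"
  proof (rule has_integral_le[OF integrable_integral lin])
    show "h integrable_on {e..b}" by (rule integrable_subinterval_real[OF hint]) (use e in auto)
    show "h x \<le> (3 * L - c * (b - x)) * P" if "x \<in> {e..b}" for x
      using hle[of x] that e by auto
  qed
  have I1: "integral {a..e} h \<le> 0"
  proof (cases "e = a")
    case True then show ?thesis by simp
  next
    case False
    then have e': "e = b - G / (2 * L)" unfolding e_def by auto
    have "integral {a..e} h \<le> integral {a..e} (\<lambda>x. 0)"
    proof (rule integral_le)
      show "h integrable_on {a..e}" by (rule integrable_subinterval_real[OF hint]) (use e in auto)
      show "h x \<le> 0" if "x \<in> {a..e}" for x using h_zero[of x] that e e' by auto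
    qed (rule integrable_0)
    then show ?thesis by simp
  qed
  have comb: "integral {a..b} h = integral {a..e} h + integral {e..b} h"
    using Henstock_Kurzweil_Integration.integral_combine[OF e(1) e(2) hint] by simp
  have quad: "((3 * L) * (b - e) - c * (b - e)^2 / 2) \<le> 3 * G / 4"
  proof -
    define T where "T = b - e"
    have "3 * G / 4 - (3 * L * T - c * T^2 / 2) = (3 / G) * (G / 2 - L * T)^2"
      unfolding c_def using G0 by (simp add: field_simps power2_eq_square)
    moreover have "(3 / G) * (G / 2 - L * T)^2 \<ge> 0" using G0 by simp
    ultimately show ?thesis unfolding T_def by linarith
  qed
  have "integral {a..b} h \<le> 3 * G / 4 * P"
    using comb I1 I2 mult_right_mono[OF quad, of P] P0 by linarith
  also have "\<dots> < G * P" using G0 P0 by simp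
  finally show ?thesis using step1 unfolding G_def P_def by linarith
qed

end
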